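(* Let $\mathcal{B}$ be a homothecy invariant collection of rectangular parallelepipeds in $\mathbb{R}^n$. Let $E\subset\mathbb{R}^n$ be a measurable set of finite measure and let $\alpha\in(0,1)$. Then for all $\xi,\delta\in(0,1)$ with $\alpha<1-\delta<\xi$ we have \[ \mathcal{H}_{\mathcal{B},\alpha}(E)\subseteq \mathcal{H}_{\mathcal{B},\,\alpha\left(1+\frac{1-\xi}{2^n}\right)}\big(\mathcal{H}_{\mathcal{B},1-\delta}(E)\big). \]
   Context: A basis $\mathcal B$ is a collection of bounded open sets in $\mathbb R^n$; it is homothecy invariant if every translate and every positive dilate of a member of $\mathcal B$ belongs to $\mathcal B$. For locally integrable $f$, $M_{\mathcal B}f(x)=\sup_{x\in R\in\mathcal B}\frac{1}{|R|}\int_R|f|$ if $x\in\bigcup_{B\in\mathcal B}B$ and $M_{\mathcal B}f(x)=0$ otherwise. For a measurable set $E$ and $\beta>0$, the halo set is $\mathcal H_{\mathcal B,\beta}(E)=\{x\in\mathbb R^n: M_{\mathcal B}\chi_E(x)>\beta\}$. Here a rectangular parallelepiped means a (open) box, and $|\cdot|$ is Lebesgue measure. *)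

theory Defs
  imports "HOL-Analysis.Analysis"
begin

definition is_open_box :: "'a::euclidean_space set \<Rightarrow> bool" where
  "is_open_box R \<longleftrightarrow> (\<exists>a b. (\<forall>i\<in>Basis. a \<bullet> i < b \<bullet> i) \<and> R = box a b)"

definition homothecy_invariant :: "'a::euclidean_space set set \<Rightarrow> bool" where
  "homothecy_invariant \<B> \<longleftrightarrow>
     (\<forall>R\<in>\<B>. \<forall>v. (\<lambda>x. v + x) ` R \<in> \<B>) \<and>
     (\<forall>R\<in>\<B>. \<forall>c::real. c > 0 \<longrightarrow> (\<lambda>x. c *\<^sub>R x) ` R \<in> \<B>)"

text \<open>Maximal operator (values in extended reals, so the supremum is always meaningful).\<close>
definition max_op :: "'a::euclidean_space set set \<Rightarrow> ('a \<Rightarrow> real) \<Rightarrow> 'a \<Rightarrow> ereal" where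
  "max_op \<B> f x =
     (if x \<in> \<Union>\<B>
      then (SUP R\<in>{R\<in>\<B>. x \<in> R}.
              ereal ((set_lebesgue_integral lebesgue R (\<lambda>y. \<bar>f y\<bar>)) / measure lebesgue R))
      else 0)"

definition halo :: "'a::euclidean_space set set \<Rightarrow> real \<Rightarrow> 'a set \<Rightarrow> 'a set" where
  "halo \<B> \<beta> E = {x. max_op \<B> (indicator E) x > ereal \<beta>}"

end

theory Submission
  imports Defs
begin


lemma box_affine_image:
  fixes a b c :: "'a::euclidean_space"
  assumes "r > 0"
  shows "(\<lambda>x. c + r *\<^sub>R x) ` box a b = box (c + r *\<^sub>R a) (c + r *\<^sub>R b)"
proof
  show "(\<lambda>x. c + r *\<^sub>R x) ` box a b \<subseteq> box (c + r *\<^sub>R a) (c + r *\<^sub>R b)"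
    using assms by (auto simp: mem_box inner_add_left)
  show "box (c + r *\<^sub>R a) (c + r *\<^sub>R b) \<subseteq> (\<lambda>x. c + r *\<^sub>R x) ` box a b"
  proof
    fix y assume y: "y \<in> box (c + r *\<^sub>R a) (c + r *\<^sub>R b)"
    have "(1/r) *\<^sub>R (y - c) \<in> box a b"
      using y assms by (auto simp: mem_box inner_add_left inner_diff_left field_simps)
    moreover have "y = c + r *\<^sub>R ((1/r) *\<^sub>R (y - c))" using assms by simp
    ultimately show "y \<in> (\<lambda>x. c + r *\<^sub>R x) ` box a b" by blast
  qed
qed

definition Bx :: "'a::euclidean_space \<Rightarrow> 'a \<Rightarrow> 'a \<Rightarrow> real \<Rightarrow> 'a set" where
  "Bx a b c r = box (c + r *\<^sub>R a) (c + r *\<^sub>R b)"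

lemma mem_Bx: "x \<in> Bx a b c r \<longleftrightarrow> (\<forall>i\<in>Basis. c\<bullet>i + r*(a\<bullet>i) < x\<bullet>i \<and> x\<bullet>i < c\<bullet>i + r*(b\<bullet>i))"
  by (auto simp: Bx_def mem_box inner_add_left)

lemma Bx_in_B:
  assumes "homothecy_invariant \<B>" "box a b \<in> \<B>" "r > 0"
  shows "Bx a b c r \<in> \<B>"
proof -
  have "(\<lambda>x. r *\<^sub>R x) ` box a b \<in> \<B>" using assms unfolding homothecy_invariant_def by blast
  then have "(\<lambda>x. c + x) ` ((\<lambda>x. r *\<^sub>R x) ` box a b) \<in> \<B>"
    using assms unfolding homothecy_invariant_def by blast
  moreover have "(\<lambda>x. c + x) ` ((\<lambda>x. r *\<^sub>R x) ` box a b) = (\<lambda>x. c + r *\<^sub>R x) ` box a b"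
    by (simp add: image_image)
  ultimately have "(\<lambda>x. c + r *\<^sub>R x) ` box a b \<in> \<B>" by metis
  then show ?thesis using box_affine_image[OF assms(3), of c a b] by (simp add: Bx_def)
qed

lemma measure_Bx:
  fixes a b c :: "'a::euclidean_space"
  assumes "r > 0"
  shows "measure lebesgue (Bx a b c r) = r ^ DIM('a) * measure lebesgue (box a b)"
proof -
  have "Bx a b c r = (\<lambda>x. r *\<^sub>R x + c) ` box a b"
    using box_affine_image[OF assms, of c a b] by (simp add: Bx_def add.commute)
  then show ?thesis using measure_lebesgue_affine[of r c "box a b"] assms by simp
qed

lemma measure_box_pos:
  fixes a b :: "'a::euclidean_space"
  assumes "\<forall>i\<in>Basis. a\<bullet>i < b\<bullet>i"
  shows "measure lebesgue (box a b) > 0"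
  using assms by (simp add: measure_lborel_box_eq inner_diff_left prod_pos less_imp_le)

lemma sli_indicator:
  assumes "A \<in> sets lebesgue" "R \<in> sets lebesgue" "emeasure lebesgue R < \<infinity>"
  shows "set_lebesgue_integral lebesgue R (\<lambda>y. \<bar>indicator A y :: real\<bar>) = measure lebesgue (R \<inter> A)"
proof -
  have eq: "(\<lambda>y. indicator R y *\<^sub>R \<bar>indicator A y :: real\<bar>) = indicator (R \<inter> A)"
    by (auto simp: indicator_def fun_eq_iff)
  have "set_lebesgue_integral lebesgue R (\<lambda>y. \<bar>indicator A y :: real\<bar>) = integral\<^sup>L lebesgue (indicator (R \<inter> A) :: _ \<Rightarrow> real)"
    unfolding set_lebesgue_integral_def eq by (rule refl)
  also have "\<dots> = measure lebesgue (R \<inter> A)" using Bochner_Integration.integral_indicator[of lebesgue "R \<inter> A"] by simp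
  finally show ?thesis .
qed

lemma max_op_gt:
  fixes E :: "'a::euclidean_space set"
  assumes B: "\<forall>R\<in>\<B>. is_open_box R" and E: "E \<in> sets lebesgue" and "\<beta> \<ge> 0"
  shows "max_op \<B> (indicator E) x > ereal \<beta> \<longleftrightarrow>
     (\<exists>R\<in>\<B>. x \<in> R \<and> measure lebesgue (R \<inter> E) / measure lebesgue R > \<beta>)"
proof -
  have I: "set_lebesgue_integral lebesgue R (\<lambda>y. \<bar>indicator E y :: real\<bar>) = measure lebesgue (R \<inter> E)"
    if "R \<in> \<B>" for R
  proof -
    have "is_open_box R" using B that by simp
    then obtain a b where "R = box a b" unfolding is_open_box_def by auto
    moreover have "box a b \<in> sets lebesgue" "emeasure lebesgue (box a b) < \<infinity>"
      using lmeasurable_box[of a b] unfolding fmeasurable_def by blast+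
    ultimately show ?thesis using E sli_indicator[of E R] by simp
  qed
  show ?thesis
  proof (cases "x \<in> \<Union>\<B>")
    case True
    have "max_op \<B> (indicator E) x = (SUP R\<in>{R\<in>\<B>. x \<in> R}.
              ereal ((set_lebesgue_integral lebesgue R (\<lambda>y. \<bar>indicator E y :: real\<bar>)) / measure lebesgue R))"
      unfolding max_op_def using True by (simp only: if_True)
    also have "\<dots> = (SUP R\<in>{R\<in>\<B>. x \<in> R}. ereal (measure lebesgue (R \<inter> E) / measure lebesgue R))"
      by (rule SUP_cong) (auto simp only: I mem_Collect_eq)
    finally have eq: "max_op \<B> (indicator E) x = (SUP R\<in>{R\<in>\<B>. x \<in> R}. ereal (measure lebesgue (R \<inter> E) / measure lebesgue R))" .
    show ?thesis unfolding eq less_SUP_iff by auto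
  next
    case False
    then show ?thesis unfolding max_op_def using \<open>\<beta> \<ge> 0\<close> by auto
  qed
qed

lemma Bx_diam:
  fixes a b c :: "'a::euclidean_space"
  assumes "x \<in> Bx a b c r" "y \<in> Bx a b c r"
  shows "dist y x < 2 * r * (\<Sum>i\<in>Basis. b\<bullet>i - a\<bullet>i)"
proof -
  have r: "r > 0 \<or> True" by simp
  have each: "\<bar>(y - x)\<bullet>i\<bar> \<le> r * (b\<bullet>i - a\<bullet>i)" if "i \<in> Basis" for i
    using assms that unfolding mem_Bx by (force simp: inner_diff_left abs_if algebra_simps)
  have pos: "0 < r * (b\<bullet>i - a\<bullet>i)" if "i \<in> Basis" for i
    using assms that unfolding mem_Bx by (force simp: algebra_simps)
  have "dist y x = norm (y - x)" by (simp add: dist_norm)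
  also have "\<dots> \<le> (\<Sum>i\<in>Basis. \<bar>(y - x)\<bullet>i\<bar>)" by (rule norm_le_l1)
  also have "\<dots> \<le> (\<Sum>i\<in>Basis. r * (b\<bullet>i - a\<bullet>i))" by (rule sum_mono) (rule each)
  also have "\<dots> < 2 * (\<Sum>i\<in>Basis. r * (b\<bullet>i - a\<bullet>i))"
  proof -
    have "0 < (\<Sum>i\<in>Basis. r * (b\<bullet>i - a\<bullet>i))"
      by (rule sum_pos) (use pos in auto)
    then show ?thesis by simp
  qed
  also have "\<dots> = 2 * r * (\<Sum>i\<in>Basis. b\<bullet>i - a\<bullet>i)" by (simp add: sum_distrib_left mult.assoc)
  finally show ?thesis .
qed

lemma measure_ball_eq:
  fixes y :: "'a::euclidean_space"
  assumes "\<rho> \<ge> 0"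
  shows "measure lebesgue (ball y \<rho>) = \<rho> ^ DIM('a) * measure lebesgue (ball (0::'a) 1)"
  using content_ball_conv_unit_ball[OF assms, of y] by simp

lemma measure_diff_Int:
  assumes "A \<in> lmeasurable" "E \<in> sets lebesgue"
  shows "measure lebesgue (A - E) = measure lebesgue A - measure lebesgue (E \<inter> A)"
proof -
  have "A - E = A - (E \<inter> A)" by auto
  then show ?thesis using assms measure_Diff[of lebesgue A "E \<inter> A"]
    by (auto simp: fmeasurable_def)
qed

lemma null_lemma:
  fixes a b :: "'a::euclidean_space" and E N :: "'a set"
  assumes ab: "\<forall>i\<in>Basis. a\<bullet>i < b\<bullet>i"
    and E: "E \<in> lmeasurable" and d0: "0 < \<delta>"
    and NE: "N \<subseteq> E"
    and N: "\<And>y \<epsilon>. y \<in> N \<Longrightarrow> \<epsilon> > 0 \<Longrightarrow> \<exists>c r. 0 < r \<and> r < \<epsilon> \<and> y \<in> Bx a b c r \<and>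
              measure lebesgue (E \<inter> Bx a b c r) \<le> (1-\<delta>) * measure lebesgue (Bx a b c r)"
  shows "negligible N"
proof -
  define K where "K = (\<Sum>i\<in>Basis. b\<bullet>i - a\<bullet>i)"
  define \<omega> where "\<omega> = measure lebesgue (ball (0::'a) 1)"
  define m0 where "m0 = measure lebesgue (box a b)"
  define \<eta> where "\<eta> = \<delta> * m0 / (\<omega> * (2*K) ^ DIM('a))"
  have K: "K > 0" unfolding K_def using ab by (intro sum_pos) auto
  have \<omega>: "\<omega> > 0" unfolding \<omega>_def using content_ball_pos[of 1 "0::'a"] by simp
  have m0: "m0 > 0" unfolding m0_def using measure_box_pos[OF ab] .
  have \<eta>: "\<eta> > 0" unfolding \<eta>_def using K \<omega> m0 d0 by simp
  show ?thesis unfolding negligible_outer_le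
  proof (intro allI impI)
    fix e :: real assume e: "e > 0"
    obtain G where G: "open G" "E \<subseteq> G" "G - E \<in> lmeasurable" "emeasure lebesgue (G - E) < ennreal (e*\<eta>)"
      using sets_lebesgue_outer_open[of E "e*\<eta>"] E e \<eta> by auto
    have mGE: "measure lebesgue (G - E) < e * \<eta>"
      using G(3,4) e \<eta> by (simp add: emeasure_eq_measure2 ennreal_less_iff)
    define KK where "KK = {(y,\<rho>). 0 < \<rho> \<and> ball y \<rho> \<subseteq> G \<and>
                      \<eta> * measure lebesgue (ball y \<rho>) \<le> measure lebesgue (ball y \<rho> - E)}"
    have fine: "\<exists>i. i \<in> KK \<and> y \<in> ball (fst i) (snd i) \<and> snd i < d" if y: "y \<in> N" and d: "0 < d" for y d
    proof -
      have "y \<in> G" using y NE G by auto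
      then obtain \<rho>0 where \<rho>0: "\<rho>0 > 0" "ball y \<rho>0 \<subseteq> G" using G(1) open_contains_ball by blast
      define \<epsilon> where "\<epsilon> = min d \<rho>0 / (2*K)"
      have \<epsilon>: "\<epsilon> > 0" unfolding \<epsilon>_def using d \<rho>0 K by simp
      obtain c r where cr: "0 < r" "r < \<epsilon>" "y \<in> Bx a b c r"
         "measure lebesgue (E \<inter> Bx a b c r) \<le> (1-\<delta>) * measure lebesgue (Bx a b c r)"
        using N[OF y \<epsilon>] by blast
      define \<rho> where "\<rho> = 2*r*K"
      have \<rho>: "\<rho> > 0" "\<rho> < min d \<rho>0" using cr K unfolding \<rho>_def \<epsilon>_def by (auto simp: field_simps)
      have sub: "Bx a b c r \<subseteq> ball y \<rho>"
        using Bx_diam[OF _ cr(3)] unfolding \<rho>_def K_def by (auto simp: dist_commute)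
      have ballG: "ball y \<rho> \<subseteq> G" using \<rho> \<rho>0 by auto
      have mBx: "measure lebesgue (Bx a b c r) = r ^ DIM('a) * m0"
        using measure_Bx[OF cr(1)] unfolding m0_def .
      have Bxl: "Bx a b c r \<in> lmeasurable" by (simp add: Bx_def)
      have "measure lebesgue (Bx a b c r - E) = measure lebesgue (Bx a b c r) - measure lebesgue (E \<inter> Bx a b c r)"
        using Bxl E by (intro measure_diff_Int) auto
      then have "measure lebesgue (Bx a b c r - E) \<ge> \<delta> * (r ^ DIM('a) * m0)"
        using cr(4) mBx by (simp add: algebra_simps)
      also have "measure lebesgue (Bx a b c r - E) \<le> measure lebesgue (ball y \<rho> - E)"
      proof (rule measure_mono_fmeasurable)
        show "Bx a b c r - E \<subseteq> ball y \<rho> - E" using sub by auto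
        show "Bx a b c r - E \<in> sets lebesgue" using E unfolding Bx_def by (auto simp: fmeasurableD)
        show "ball y \<rho> - E \<in> lmeasurable" using E by (auto simp: fmeasurableD intro: fmeasurable_Diff)
      qed
      finally have A: "\<delta> * (r ^ DIM('a) * m0) \<le> measure lebesgue (ball y \<rho> - E)" .
      have mb: "measure lebesgue (ball y \<rho>) = \<rho> ^ DIM('a) * \<omega>"
        using measure_ball_eq[OF less_imp_le[OF \<rho>(1)], of y] unfolding \<omega>_def .
      have "\<eta> * measure lebesgue (ball y \<rho>) = \<delta> * (r ^ DIM('a) * m0)"
        unfolding mb unfolding \<eta>_def \<rho>_def
        using \<omega> K by (simp add: power_mult_distrib field_simps)
      with A have "(y, \<rho>) \<in> KK" unfolding KK_def using \<rho> ballG by auto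
      then show ?thesis using \<rho> by (intro exI[of _ "(y,\<rho>)"]) auto
    qed
    obtain C where C: "countable C" "C \<subseteq> KK"
      and pw: "pairwise (\<lambda>i j. disjnt (ball (fst i) (snd i)) (ball (fst j) (snd j))) C"
      and negC: "negligible (N - (\<Union>i\<in>C. ball (fst i) (snd i)))"
      by (rule Vitali_covering_theorem_balls[of N KK fst snd]) (use fine in blast)+
    define U where "U = (\<Union>i\<in>C. ball (fst i) (snd i))"
    have bound: "measure lebesgue (\<Union>i\<in>I. ball (fst i) (snd i)) \<le> e" if I: "I \<subseteq> C" "finite I" for I
    proof -
      have pwI: "pairwise (\<lambda>i j. disjnt (ball (fst i) (snd i)) (ball (fst j) (snd j))) I"
        using pw I pairwise_subset by blast
      have pwI2: "pairwise (\<lambda>i j. disjnt (ball (fst i) (snd i) - E) (ball (fst j) (snd j) - E)) I"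
        using pwI unfolding pairwise_def disjnt_def by blast
      have "measure lebesgue (\<Union>i\<in>I. ball (fst i) (snd i)) = (\<Sum>i\<in>I. measure lebesgue (ball (fst i) (snd i)))"
        by (rule measure_UNION') (use I pwI in auto)
      also have "\<dots> \<le> (\<Sum>i\<in>I. measure lebesgue (ball (fst i) (snd i) - E) / \<eta>)"
        apply (rule sum_mono)
        using I C(2) \<eta> unfolding KK_def by (auto simp: field_simps)
      also have "\<dots> = (\<Sum>i\<in>I. measure lebesgue (ball (fst i) (snd i) - E)) / \<eta>"
        by (simp add: sum_divide_distrib)
      also have "(\<Sum>i\<in>I. measure lebesgue (ball (fst i) (snd i) - E)) = measure lebesgue (\<Union>i\<in>I. ball (fst i) (snd i) - E)"
        by (rule measure_UNION'[symmetric]) (use I pwI2 E in \<open>auto intro: fmeasurable.Diff\<close>)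
      also have "\<dots> \<le> measure lebesgue (G - E)"
      proof (rule measure_mono_fmeasurable)
        show "(\<Union>i\<in>I. ball (fst i) (snd i) - E) \<subseteq> G - E" using I C(2) unfolding KK_def by force
        have "(\<Union>i\<in>I. ball (fst i) (snd i) - E) = (\<Union>i\<in>I. ball (fst i) (snd i)) - E" by blast
        then show "(\<Union>i\<in>I. ball (fst i) (snd i) - E) \<in> sets lebesgue"
          using I E by (auto intro!: sets.Diff sets.finite_UN simp: fmeasurableD)
        show "G - E \<in> lmeasurable" by (rule G(3))
      qed
      finally have f: "measure lebesgue (\<Union>i\<in>I. ball (fst i) (snd i)) \<le> measure lebesgue (G - E) / \<eta>"
        using \<eta> by (simp add: divide_right_mono)
      moreover have "measure lebesgue (G - E) / \<eta> < e" using mGE \<eta> by (simp add: divide_less_eq mult.commute)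
      ultimately show ?thesis by linarith
    qed
    have Ul: "U \<in> lmeasurable"
      unfolding U_def using fmeasurable_UN_bound[OF C(1) _ bound] by simp
    have Um: "measure lebesgue U \<le> e"
      unfolding U_def using measure_UN_bound[OF C(1) _ bound] by simp
    have negd: "negligible (U - (N \<union> U) \<union> ((N \<union> U) - U))"
      using negC unfolding U_def by (rule negligible_subset) auto
    have "N \<union> U \<in> lmeasurable" by (rule lmeasurable_negligible_symdiff[OF Ul negd])
    moreover have "measure lebesgue (N \<union> U) \<le> e"
      using measure_negligible_symdiff[OF Ul negd] Um by simp
    ultimately show "\<exists>T. N \<subseteq> T \<and> T \<in> lmeasurable \<and> measure lebesgue T \<le> e"
      by blast
  qed
qed

definition vtx :: "'a::euclidean_space \<Rightarrow> 'a \<Rightarrow> 'a set \<Rightarrow> 'a" where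
  "vtx a b S = (\<Sum>i\<in>Basis. (if i \<in> S then b\<bullet>i else a\<bullet>i) *\<^sub>R i)"

lemma sum_Basis_inner:
  fixes j :: "'a::euclidean_space"
  assumes "j \<in> Basis"
  shows "(\<Sum>i\<in>Basis. f i *\<^sub>R i) \<bullet> j = f j"
proof -
  have "(\<Sum>i\<in>Basis. f i *\<^sub>R i) \<bullet> j = (\<Sum>i\<in>Basis. f i * (i \<bullet> j))"
    by (simp add: inner_sum_left)
  also have "\<dots> = (\<Sum>i\<in>Basis. if i = j then f j else 0)"
    using assms by (intro sum.cong) (auto simp: inner_Basis)
  also have "\<dots> = f j" using assms by simp
  finally show ?thesis .
qed

lemma vtx_inner: "j \<in> Basis \<Longrightarrow> vtx a b S \<bullet> j = (if j \<in> S then b\<bullet>j else a\<bullet>j)"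
  using sum_Basis_inner[of j "\<lambda>i. if i \<in> S then b\<bullet>i else a\<bullet>i"] by (simp only: vtx_def)

definition Qb :: "'a::euclidean_space \<Rightarrow> 'a \<Rightarrow> 'a \<Rightarrow> real \<Rightarrow> 'a set \<Rightarrow> real \<Rightarrow> 'a set" where
  "Qb a b c r S t = Bx a b (c + ((1-t)*r) *\<^sub>R vtx a b S) (t*r)"

lemma mem_Qb:
  "x \<in> Qb a b c r S t \<longleftrightarrow> (\<forall>i\<in>Basis.
     (if i \<in> S then c\<bullet>i + r*(b\<bullet>i) - t*r*(b\<bullet>i - a\<bullet>i) < x\<bullet>i \<and> x\<bullet>i < c\<bullet>i + r*(b\<bullet>i)
      else c\<bullet>i + r*(a\<bullet>i) < x\<bullet>i \<and> x\<bullet>i < c\<bullet>i + r*(a\<bullet>i) + t*r*(b\<bullet>i - a\<bullet>i)))"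
  unfolding Qb_def mem_Bx
  by (intro ball_cong refl) (auto simp: inner_add_left vtx_inner algebra_simps)

lemma Qb_mono:
  assumes ab: "\<forall>i\<in>Basis. a\<bullet>i < b\<bullet>i" and "r > 0" "t \<le> t'"
  shows "Qb a b c r S t \<subseteq> Qb a b c r S t'"
proof
  fix x assume x: "x \<in> Qb a b c r S t"
  have "t*r*(b\<bullet>i - a\<bullet>i) \<le> t'*r*(b\<bullet>i - a\<bullet>i)" if "i \<in> Basis" for i
    using assms that by (intro mult_right_mono) (auto intro: mult_right_mono less_imp_le)
  then show "x \<in> Qb a b c r S t'"
    using x unfolding mem_Qb by (smt (verit))
qed

lemma Qb_one: "Qb a b c r S 1 = Bx a b c r"
  unfolding Qb_def by simp

lemma Qb_sub:
  assumes ab: "\<forall>i\<in>Basis. a\<bullet>i < b\<bullet>i" and "r > 0" "t \<le> 1"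
  shows "Qb a b c r S t \<subseteq> Bx a b c r"
  using Qb_mono[OF assms] Qb_one by metis

lemma Qb_measure:
  fixes a b c :: "'a::euclidean_space"
  assumes "r > 0" "t > 0"
  shows "measure lebesgue (Qb a b c r S t) = (t*r) ^ DIM('a) * measure lebesgue (box a b)"
  unfolding Qb_def using assms by (intro measure_Bx) simp

lemma Qb_sup:
  fixes a b c :: "'a::euclidean_space"
  assumes ab: "\<forall>i\<in>Basis. a\<bullet>i < b\<bullet>i" and r: "r > 0"
    and T: "T \<noteq> {}" "bdd_above T"
    and x: "x \<in> Qb a b c r S (Sup T)"
  shows "\<exists>t\<in>T. x \<in> Qb a b c r S t"
proof -
  define \<tau> where "\<tau> i = (if i \<in> S then (c\<bullet>i + r*(b\<bullet>i) - x\<bullet>i) / (r*(b\<bullet>i - a\<bullet>i))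
                          else (x\<bullet>i - c\<bullet>i - r*(a\<bullet>i)) / (r*(b\<bullet>i - a\<bullet>i)))" for i
  have pos: "r*(b\<bullet>i - a\<bullet>i) > 0" if "i \<in> Basis" for i using ab r that by simp
  have key: "x \<in> Qb a b c r S t \<longleftrightarrow> (\<forall>i\<in>Basis. (if i \<in> S then x\<bullet>i < c\<bullet>i + r*(b\<bullet>i) else c\<bullet>i + r*(a\<bullet>i) < x\<bullet>i) \<and> \<tau> i < t)" for t
    unfolding mem_Qb
  proof (intro ball_cong refl)
    fix i :: 'a assume i: "i \<in> Basis"
    have "(c\<bullet>i + r*(b\<bullet>i) - x\<bullet>i) / (r*(b\<bullet>i - a\<bullet>i)) < t \<longleftrightarrow> c\<bullet>i + r*(b\<bullet>i) - x\<bullet>i < t*(r*(b\<bullet>i - a\<bullet>i))"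
      using pos[OF i] by (simp add: divide_less_eq)
    moreover have "(x\<bullet>i - c\<bullet>i - r*(a\<bullet>i)) / (r*(b\<bullet>i - a\<bullet>i)) < t \<longleftrightarrow> x\<bullet>i - c\<bullet>i - r*(a\<bullet>i) < t*(r*(b\<bullet>i - a\<bullet>i))"
      using pos[OF i] by (simp add: divide_less_eq)
    ultimately show "(if i \<in> S then c\<bullet>i + r*(b\<bullet>i) - t*r*(b\<bullet>i - a\<bullet>i) < x\<bullet>i \<and> x\<bullet>i < c\<bullet>i + r*(b\<bullet>i)
      else c\<bullet>i + r*(a\<bullet>i) < x\<bullet>i \<and> x\<bullet>i < c\<bullet>i + r*(a\<bullet>i) + t*r*(b\<bullet>i - a\<bullet>i)) =
      ((if i \<in> S then x\<bullet>i < c\<bullet>i + r*(b\<bullet>i) else c\<bullet>i + r*(a\<bullet>i) < x\<bullet>i) \<and> \<tau> i < t)"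
      unfolding \<tau>_def by (auto simp: algebra_simps)
  qed
  have fin: "finite (\<tau> ` Basis)" "\<tau> ` Basis \<noteq> {}" by auto
  have "Max (\<tau> ` Basis) < Sup T" using x unfolding key by (simp add: Max_less_iff[OF fin])
  then obtain t where t: "t \<in> T" "Max (\<tau> ` Basis) < t" using less_cSup_iff[OF T] by blast
  then have "\<forall>i\<in>Basis. \<tau> i < t" by (simp add: Max_less_iff[OF fin])
  with x show ?thesis unfolding key using t by auto
qed

lemma children_disjoint:
  fixes a b c :: "'a::euclidean_space"
  assumes "S \<subseteq> Basis" "S' \<subseteq> Basis" "S \<noteq> S'"
  shows "Qb a b c r S (1/2) \<inter> Qb a b c r S' (1/2) = {}"
proof -
  obtain i where i: "i \<in> Basis" "(i \<in> S \<and> i \<notin> S') \<or> (i \<notin> S \<and> i \<in> S')" using assms by blast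
  show ?thesis
  proof (rule ccontr)
    assume "Qb a b c r S (1/2) \<inter> Qb a b c r S' (1/2) \<noteq> {}"
    then obtain x where "x \<in> Qb a b c r S (1/2)" "x \<in> Qb a b c r S' (1/2)" by blast
    then have "(if i \<in> S then c\<bullet>i + r*(b\<bullet>i) - 1/2*r*(b\<bullet>i - a\<bullet>i) < x\<bullet>i \<and> x\<bullet>i < c\<bullet>i + r*(b\<bullet>i)
      else c\<bullet>i + r*(a\<bullet>i) < x\<bullet>i \<and> x\<bullet>i < c\<bullet>i + r*(a\<bullet>i) + 1/2*r*(b\<bullet>i - a\<bullet>i))"
       "(if i \<in> S' then c\<bullet>i + r*(b\<bullet>i) - 1/2*r*(b\<bullet>i - a\<bullet>i) < x\<bullet>i \<and> x\<bullet>i < c\<bullet>i + r*(b\<bullet>i)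
      else c\<bullet>i + r*(a\<bullet>i) < x\<bullet>i \<and> x\<bullet>i < c\<bullet>i + r*(a\<bullet>i) + 1/2*r*(b\<bullet>i - a\<bullet>i))"
      unfolding mem_Qb using i(1) by blast+
    then show False using i(2) by (auto simp: algebra_simps split: if_splits)
  qed
qed

lemma children_cover:
  fixes a b c :: "'a::euclidean_space"
  shows "Bx a b c r - (\<Union>S\<in>Pow Basis. Qb a b c r S (1/2)) \<subseteq>
           (\<Union>i\<in>Basis. {x. i \<bullet> x = c\<bullet>i + r*(a\<bullet>i + b\<bullet>i)/2})"
proof
  fix x assume x: "x \<in> Bx a b c r - (\<Union>S\<in>Pow Basis. Qb a b c r S (1/2))"
  show "x \<in> (\<Union>i\<in>Basis. {x. i \<bullet> x = c\<bullet>i + r*(a\<bullet>i + b\<bullet>i)/2})"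
  proof (rule ccontr)
    assume nh: "x \<notin> (\<Union>i\<in>Basis. {x. i \<bullet> x = c\<bullet>i + r*(a\<bullet>i + b\<bullet>i)/2})"
    define S where "S = {i\<in>Basis. x\<bullet>i > c\<bullet>i + r*(a\<bullet>i + b\<bullet>i)/2}"
    have "x \<in> Qb a b c r S (1/2)"
      unfolding mem_Qb
    proof
      fix i :: 'a assume i: "i \<in> Basis"
      have xB: "x \<in> Bx a b c r" using x by blast
      have xb: "c\<bullet>i + r*(a\<bullet>i) < x\<bullet>i \<and> x\<bullet>i < c\<bullet>i + r*(b\<bullet>i)" using xB i unfolding mem_Bx by blast
      have ne0: "\<not> (i \<bullet> x = c\<bullet>i + r*(a\<bullet>i + b\<bullet>i)/2)" using nh i by blast
      have ne: "x\<bullet>i \<noteq> c\<bullet>i + r*(a\<bullet>i + b\<bullet>i)/2" using ne0 by (simp add: inner_commute)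
      show "if i \<in> S then c\<bullet>i + r*(b\<bullet>i) - 1/2*r*(b\<bullet>i - a\<bullet>i) < x\<bullet>i \<and> x\<bullet>i < c\<bullet>i + r*(b\<bullet>i)
      else c\<bullet>i + r*(a\<bullet>i) < x\<bullet>i \<and> x\<bullet>i < c\<bullet>i + r*(a\<bullet>i) + 1/2*r*(b\<bullet>i - a\<bullet>i)"
      proof -
        have e1: "c\<bullet>i + r*(b\<bullet>i) - 1/2*r*(b\<bullet>i - a\<bullet>i) = c\<bullet>i + r*(a\<bullet>i + b\<bullet>i)/2"
          by (simp add: algebra_simps)
        have e2: "c\<bullet>i + r*(a\<bullet>i) + 1/2*r*(b\<bullet>i - a\<bullet>i) = c\<bullet>i + r*(a\<bullet>i + b\<bullet>i)/2"
          by (simp add: algebra_simps)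
        show ?thesis
        proof (cases "i \<in> S")
          case True
          then have "x\<bullet>i > c\<bullet>i + r*(a\<bullet>i + b\<bullet>i)/2" unfolding S_def by simp
          then show ?thesis using True xb e1 by simp
        next
          case False
          then have "x\<bullet>i \<le> c\<bullet>i + r*(a\<bullet>i + b\<bullet>i)/2" unfolding S_def using i by auto
          then show ?thesis using False xb e2 ne by simp
        qed
      qed
    qed
    moreover have "S \<in> Pow Basis" unfolding S_def by auto
    ultimately show False using x by blast
  qed
qed

lemma set_aux1: "(\<And>S. g S \<subseteq> B) \<Longrightarrow> (\<Union>S\<in>I. F \<inter> g S) - F \<inter> B = {}"
  by blast

lemma set_aux2: "F \<inter> B - (\<Union>S\<in>I. F \<inter> g S) \<subseteq> B - (\<Union>S\<in>I. g S)"
  by blast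

lemma children_sum:
  fixes a b c :: "'a::euclidean_space"
  assumes ab: "\<forall>i\<in>Basis. a\<bullet>i < b\<bullet>i" and r: "r > 0" and F: "F \<in> sets lebesgue"
  shows "(\<Sum>S\<in>Pow Basis. measure lebesgue (F \<inter> Qb a b c r S (1/2))) = measure lebesgue (F \<inter> Bx a b c r)"
proof -
  have Qm: "F \<inter> Qb a b c r S t \<in> lmeasurable" for S t
  proof -
    have "Qb a b c r S t \<inter> F \<in> lmeasurable"
      unfolding Qb_def Bx_def by (rule fmeasurable_Int_fmeasurable[OF lmeasurable_box F])
    then show ?thesis by (simp add: Int_commute)
  qed
  have "(\<Sum>S\<in>Pow Basis. measure lebesgue (F \<inter> Qb a b c r S (1/2))) =
        measure lebesgue (\<Union>S\<in>Pow Basis. F \<inter> Qb a b c r S (1/2))"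
  proof -
    have pw: "pairwise (\<lambda>i j. disjnt (F \<inter> Qb a b c r i (1/2)) (F \<inter> Qb a b c r j (1/2))) (Pow Basis)"
      unfolding pairwise_def disjnt_def using children_disjoint[of _ _ a b c r] by blast
    show ?thesis
      using measure_UNION'[of "Pow Basis" "\<lambda>S. F \<inter> Qb a b c r S (1/2)" lebesgue, OF _ _ pw] Qm by simp
  qed
  also have "\<dots> = measure lebesgue (F \<inter> Bx a b c r)"
  proof (rule measure_negligible_symdiff)
    show "F \<inter> Bx a b c r \<in> lmeasurable"
      using Qm[of _ 1] by (simp add: Qb_one)
    have sub: "Qb a b c r S (1/2) \<subseteq> Bx a b c r" for S using Qb_sub[OF ab r] by simp
    have "negligible (\<Union>i\<in>Basis. {x. i \<bullet> x = c\<bullet>i + r*(a\<bullet>i + b\<bullet>i)/2})"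
      by (intro negligible_Union) (auto intro!: negligible_hyperplane simp: nonzero_Basis)
    then show "negligible (F \<inter> Bx a b c r - (\<Union>S\<in>Pow Basis. F \<inter> Qb a b c r S (1/2)) \<union>
               ((\<Union>S\<in>Pow Basis. F \<inter> Qb a b c r S (1/2)) - F \<inter> Bx a b c r))"
    proof (rule negligible_subset)
      have e1: "(\<Union>S\<in>Pow Basis. F \<inter> Qb a b c r S (1/2)) - F \<inter> Bx a b c r = {}"
        by (rule set_aux1) (rule sub)
      have e2: "F \<inter> Bx a b c r - (\<Union>S\<in>Pow Basis. F \<inter> Qb a b c r S (1/2)) \<subseteq>
                 Bx a b c r - (\<Union>S\<in>Pow Basis. Qb a b c r S (1/2))" by (rule set_aux2)
      show "F \<inter> Bx a b c r - (\<Union>S\<in>Pow Basis. F \<inter> Qb a b c r S (1/2)) \<union>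
               ((\<Union>S\<in>Pow Basis. F \<inter> Qb a b c r S (1/2)) - F \<inter> Bx a b c r)
            \<subseteq> (\<Union>i\<in>Basis. {x. i \<bullet> x = c\<bullet>i + r*(a\<bullet>i + b\<bullet>i)/2})"
        unfolding e1 Un_empty_right by (rule subset_trans[OF e2 children_cover])
    qed
  qed
  finally show ?thesis .
qed

lemma right_limit_le:
  fixes f :: "real \<Rightarrow> real"
  assumes "isCont f t0" "t0 < u" "\<And>t. t0 < t \<Longrightarrow> t \<le> u \<Longrightarrow> A \<le> f t"
  shows "A \<le> f t0"
proof (rule tendsto_lowerbound)
  show "(f \<longlongrightarrow> f t0) (at_right t0)"
    using assms(1) unfolding isCont_def filterlim_at_split by blast
  show "\<forall>\<^sub>F t in at_right t0. A \<le> f t"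
    unfolding eventually_at_right_field using assms(2,3) by (intro exI[of _ u]) auto
qed simp



definition lowd :: "'a::euclidean_space set \<Rightarrow> real \<Rightarrow> 'a set \<Rightarrow> bool" where
  "lowd E \<delta> X \<longleftrightarrow> measure lebesgue (E \<inter> X) \<le> (1-\<delta>) * measure lebesgue X"

lemma Qb_lmeasurable: "Qb a b c r S t \<in> lmeasurable"
  unfolding Qb_def Bx_def by simp

lemma Bx_lmeasurable: "Bx a b c r \<in> lmeasurable"
  unfolding Bx_def by simp

lemma good_case:
  fixes a b c :: "'a::euclidean_space"
  assumes ab: "\<forall>i\<in>Basis. a\<bullet>i < b\<bullet>i" and r: "r > 0" and E: "E \<in> sets lebesgue"
    and Hm: "H \<in> sets lebesgue"
    and hi: "\<And>c r. r > 0 \<Longrightarrow> \<not> lowd E \<delta> (Bx a b c r) \<Longrightarrow> Bx a b c r \<subseteq> H"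
    and d: "0 < \<delta>" and low: "lowd E \<delta> (Bx a b c r)" and nl: "\<not> lowd E \<delta> (Qb a b c r S (1/2))"
  shows "\<delta> / 2 ^ DIM('a) * measure lebesgue (Bx a b c r) \<le> measure lebesgue ((H - E) \<inter> Bx a b c r)"
proof -
  define n where "n = DIM('a)"
  define m0 where "m0 = measure lebesgue (box a b)"
  have m0: "m0 > 0" unfolding m0_def by (rule measure_box_pos[OF ab])
  define T where "T = {t. 1/2 \<le> t \<and> t \<le> 1 \<and> \<not> lowd E \<delta> (Qb a b c r S t)}"
  have hT: "1/2 \<in> T" unfolding T_def using nl by simp
  have bT: "bdd_above T" unfolding T_def by (rule bdd_aboveI[of _ 1]) auto
  have Tne: "T \<noteq> {}" using hT by blast
  define t0 where "t0 = Sup T"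
  have t0a: "1/2 \<le> t0" unfolding t0_def using hT bT by (rule cSup_upper)
  have t0b: "t0 \<le> 1" unfolding t0_def using Tne by (rule cSup_least) (simp add: T_def)
  have QH: "Qb a b c r S t0 \<subseteq> H"
  proof
    fix x assume "x \<in> Qb a b c r S t0"
    then obtain t where t: "t \<in> T" "x \<in> Qb a b c r S t"
      using Qb_sup[OF ab r Tne bT] unfolding t0_def by blast
    have tpos: "t * r > 0" using t(1) r unfolding T_def by simp
    have "\<not> lowd E \<delta> (Bx a b (c + ((1-t)*r) *\<^sub>R vtx a b S) (t*r))"
      using t(1) unfolding T_def Qb_def by simp
    then have "Qb a b c r S t \<subseteq> H" unfolding Qb_def using hi tpos by blast
    then show "x \<in> H" using t by blast
  qed
  have mQ: "measure lebesgue (Qb a b c r S t) = (t*r)^n * m0" if "t > 0" for t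
    using Qb_measure[OF r that] unfolding m0_def n_def by simp
  have EQ: "E \<inter> Qb a b c r S t \<in> lmeasurable" for t
    using fmeasurable_Int_fmeasurable[OF Qb_lmeasurable E] by (simp add: Int_commute)
  have lowt0: "measure lebesgue (E \<inter> Qb a b c r S t0) \<le> (1-\<delta>) * ((t0*r)^n * m0)"
  proof (cases "t0 = 1")
    case True
    then show ?thesis using low mQ[of 1] unfolding lowd_def by (simp add: Qb_one)
  next
    case False
    then have lt: "t0 < 1" using t0b by simp
    show ?thesis
    proof (rule right_limit_le[where u=1 and f="\<lambda>t. (1-\<delta>) * ((t*r)^n * m0)"])
      show "isCont (\<lambda>t. (1-\<delta>) * ((t*r)^n * m0)) t0" by (intro continuous_intros)
      show "t0 < 1" by (rule lt)
      fix t assume tt: "t0 < t" "t \<le> 1"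
      have "t \<notin> T"
      proof
        assume "t \<in> T"
        then have "t \<le> t0" unfolding t0_def using bT by (rule cSup_upper)
        then show False using tt by simp
      qed
      then have "lowd E \<delta> (Qb a b c r S t)" using tt t0a unfolding T_def by auto
      then have A: "measure lebesgue (E \<inter> Qb a b c r S t) \<le> (1-\<delta>) * ((t*r)^n * m0)"
        unfolding lowd_def using mQ[of t] tt t0a by simp
      have "measure lebesgue (E \<inter> Qb a b c r S t0) \<le> measure lebesgue (E \<inter> Qb a b c r S t)"
      proof (rule measure_mono_fmeasurable)
        show "E \<inter> Qb a b c r S t0 \<subseteq> E \<inter> Qb a b c r S t" using Qb_mono[OF ab r less_imp_le[OF tt(1)], of c S] by auto
        show "E \<inter> Qb a b c r S t0 \<in> sets lebesgue" using EQ by (simp add: fmeasurableD)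
        show "E \<inter> Qb a b c r S t \<in> lmeasurable" by (rule EQ)
      qed
      with A show "measure lebesgue (E \<inter> Qb a b c r S t0) \<le> (1-\<delta>) * ((t*r)^n * m0)" by linarith
    qed
  qed
  have t0pos: "t0 > 0" using t0a by simp
  have "measure lebesgue (Qb a b c r S t0 - E) \<le> measure lebesgue ((H - E) \<inter> Bx a b c r)"
  proof (rule measure_mono_fmeasurable)
    show "Qb a b c r S t0 - E \<subseteq> (H - E) \<inter> Bx a b c r" using QH Qb_sub[OF ab r t0b] by blast
    show "Qb a b c r S t0 - E \<in> sets lebesgue" using E fmeasurableD[OF Qb_lmeasurable] by (rule sets.Diff[rotated])
    show "(H - E) \<inter> Bx a b c r \<in> lmeasurable"
      using fmeasurable_Int_fmeasurable[OF Bx_lmeasurable sets.Diff[OF Hm E]] by (simp add: Int_commute)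
  qed
  moreover have "measure lebesgue (Qb a b c r S t0 - E) = (t0*r)^n * m0 - measure lebesgue (E \<inter> Qb a b c r S t0)"
    using measure_diff_Int[OF Qb_lmeasurable E] mQ[OF t0pos] by simp
  moreover have "\<delta> / 2 ^ DIM('a) * measure lebesgue (Bx a b c r) = \<delta> * ((r/2)^n * m0)"
    using measure_Bx[OF r, of a b c] unfolding m0_def n_def by (simp add: power_divide)
  moreover have "(r/2)^n \<le> (t0*r)^n"
  proof (rule power_mono)
    show "r/2 \<le> t0*r" using mult_right_mono[OF t0a less_imp_le[OF r]] by simp
  qed (use r in simp)
  moreover have "\<delta> * ((r/2)^n * m0) \<le> \<delta> * ((t0*r)^n * m0)"
    using calculation(4) m0 d by (intro mult_left_mono mult_right_mono) auto
  ultimately show ?thesis using lowt0 by (smt (verit, ccfv_threshold) left_diff_distrib mult_cancel_right1)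
qed

definition Uk :: "'a::euclidean_space \<Rightarrow> 'a \<Rightarrow> 'a set \<Rightarrow> real \<Rightarrow> nat \<Rightarrow> 'a \<Rightarrow> real \<Rightarrow> 'a set" where
  "Uk a b E \<delta> k c r = {y \<in> Bx a b c r. \<exists>c' r'. 0 < r' \<and> r' \<le> r / 2^k \<and> y \<in> Bx a b c' r' \<and>
       Bx a b c' r' \<subseteq> Bx a b c r \<and> lowd E \<delta> (Bx a b c' r')}"

lemma Uk_sub: "Uk a b E \<delta> k c r \<subseteq> Bx a b c r"
  unfolding Uk_def by blast

lemma Uk_lmeasurable: "Uk a b E \<delta> k c r \<in> lmeasurable"
proof (rule lmeasurable_open)
  show "bounded (Uk a b E \<delta> k c r)"
    by (rule bounded_subset[OF _ Uk_sub]) (simp add: Bx_def)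
  have "Uk a b E \<delta> k c r = \<Union>{Bx a b c' r' | c' r'. 0 < r' \<and> r' \<le> r / 2^k \<and>
       Bx a b c' r' \<subseteq> Bx a b c r \<and> lowd E \<delta> (Bx a b c' r')}"
    unfolding Uk_def by auto
  then show "open (Uk a b E \<delta> k c r)"
    by (auto simp: Bx_def)
qed

lemma Uk_zero:
  assumes "r > 0" "lowd E \<delta> (Bx a b c r)"
  shows "Uk a b E \<delta> 0 c r = Bx a b c r"
  unfolding Uk_def using assms by auto

lemma Uk_child:
  assumes ab: "\<forall>i\<in>Basis. a\<bullet>i < b\<bullet>i" and r: "r > 0"
  shows "Uk a b E \<delta> k (c + ((1 - 1/2)*r) *\<^sub>R vtx a b S) (1/2*r) \<subseteq> Uk a b E \<delta> (Suc k) c r \<inter> Qb a b c r S (1/2)"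
proof
  fix y assume y: "y \<in> Uk a b E \<delta> k (c + ((1 - 1/2)*r) *\<^sub>R vtx a b S) (1/2*r)"
  have ch: "Bx a b (c + ((1 - 1/2)*r) *\<^sub>R vtx a b S) (1/2*r) = Qb a b c r S (1/2)"
    unfolding Qb_def by simp
  have chs: "Qb a b c r S (1/2) \<subseteq> Bx a b c r" using Qb_sub[OF ab r] by simp
  from y obtain c' r' where cr: "0 < r'" "r' \<le> (1/2*r) / 2^k" "y \<in> Bx a b c' r'"
     "Bx a b c' r' \<subseteq> Qb a b c r S (1/2)" "lowd E \<delta> (Bx a b c' r')" and yQ: "y \<in> Qb a b c r S (1/2)"
    unfolding Uk_def ch by blast
  have "r' \<le> r / 2^(Suc k)" using cr(2) by simp
  then show "y \<in> Uk a b E \<delta> (Suc k) c r \<inter> Qb a b c r S (1/2)"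
    unfolding Uk_def using cr chs yQ by blast
qed

lemma main_claim:
  fixes a b :: "'a::euclidean_space"
  assumes ab: "\<forall>i\<in>Basis. a\<bullet>i < b\<bullet>i" and E: "E \<in> sets lebesgue"
    and Hm: "H \<in> sets lebesgue"
    and hi: "\<And>c r. r > 0 \<Longrightarrow> \<not> lowd E \<delta> (Bx a b c r) \<Longrightarrow> Bx a b c r \<subseteq> H"
    and d: "0 < \<delta>"
  shows "r > 0 \<Longrightarrow> lowd E \<delta> (Bx a b c r) \<Longrightarrow>
     \<delta> / 2 ^ DIM('a) * (measure lebesgue (E \<inter> Bx a b c r) - measure lebesgue (E \<inter> Uk a b E \<delta> k c r))
       \<le> measure lebesgue ((H - E) \<inter> Bx a b c r)"
proof (induction k arbitrary: c r)
  case 0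
  then show ?case using Uk_zero[OF 0] by simp
next
  case (Suc k)
  note r = Suc.prems(1) and low = Suc.prems(2)
  define \<gamma> where "\<gamma> = \<delta> / 2 ^ DIM('a)"
  have \<gamma>: "\<gamma> > 0" unfolding \<gamma>_def using d by simp
  have EB: "E \<inter> Bx a b c r \<in> lmeasurable"
    using fmeasurable_Int_fmeasurable[OF Bx_lmeasurable E] by (simp add: Int_commute)
  have EU: "E \<inter> Uk a b E \<delta> j c' r' \<in> lmeasurable" for j c' r'
    using fmeasurable_Int_fmeasurable[OF Uk_lmeasurable E] by (simp add: Int_commute)
  show ?case
  proof (cases "\<exists>S\<in>Pow Basis. \<not> lowd E \<delta> (Qb a b c r S (1/2))")
    case True
    then obtain S where "\<not> lowd E \<delta> (Qb a b c r S (1/2))" by blast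
    from good_case[OF ab r E Hm hi d low this]
    have g: "\<gamma> * measure lebesgue (Bx a b c r) \<le> measure lebesgue ((H - E) \<inter> Bx a b c r)"
      unfolding \<gamma>_def .
    have le: "measure lebesgue (E \<inter> Bx a b c r) \<le> measure lebesgue (Bx a b c r)"
      by (rule measure_mono_fmeasurable) (auto simp: Bx_lmeasurable fmeasurableD EB)
    have nn: "0 \<le> measure lebesgue (E \<inter> Uk a b E \<delta> (Suc k) c r)" by (rule measure_nonneg)
    have "\<gamma> * (measure lebesgue (E \<inter> Bx a b c r) - measure lebesgue (E \<inter> Uk a b E \<delta> (Suc k) c r))
        \<le> \<gamma> * measure lebesgue (Bx a b c r)"
      by (rule mult_left_mono) (use le nn \<gamma> in linarith)+
    with g show ?thesis unfolding \<gamma>_def by linarith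
  next
    case False
    define cS where "cS S = c + ((1 - 1/2)*r) *\<^sub>R vtx a b S" for S
    define rS where "rS = 1/2*r"
    have rS: "rS > 0" unfolding rS_def using r by simp
    have ch: "Bx a b (cS S) rS = Qb a b c r S (1/2)" for S
      unfolding Qb_def cS_def rS_def by simp
    have IH: "\<gamma> * (measure lebesgue (E \<inter> Qb a b c r S (1/2)) - measure lebesgue (E \<inter> Uk a b E \<delta> k (cS S) rS))
       \<le> measure lebesgue ((H - E) \<inter> Qb a b c r S (1/2))" if S: "S \<in> Pow Basis" for S
      using Suc.IH[OF rS, of "cS S"] False S unfolding ch \<gamma>_def by blast
    have s1: "(\<Sum>S\<in>Pow Basis. measure lebesgue (E \<inter> Qb a b c r S (1/2))) = measure lebesgue (E \<inter> Bx a b c r)"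
      by (rule children_sum[OF ab r E])
    have s2: "(\<Sum>S\<in>Pow Basis. measure lebesgue ((H - E) \<inter> Qb a b c r S (1/2))) = measure lebesgue ((H - E) \<inter> Bx a b c r)"
      by (rule children_sum[OF ab r sets.Diff[OF Hm E]])
    have s3: "(\<Sum>S\<in>Pow Basis. measure lebesgue (E \<inter> Uk a b E \<delta> k (cS S) rS)) \<le> measure lebesgue (E \<inter> Uk a b E \<delta> (Suc k) c r)"
    proof -
      have sub: "E \<inter> Uk a b E \<delta> k (cS S) rS \<subseteq> (E \<inter> Uk a b E \<delta> (Suc k) c r) \<inter> Qb a b c r S (1/2)" for S
        using Uk_child[OF ab r, where E=E and \<delta>=\<delta> and k=k and S=S and c=c] unfolding cS_def rS_def by blast
      have pw: "pairwise (\<lambda>i j. disjnt (E \<inter> Uk a b E \<delta> k (cS i) rS) (E \<inter> Uk a b E \<delta> k (cS j) rS)) (Pow Basis)"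
        unfolding pairwise_def disjnt_def
      proof (intro ballI impI)
        fix S S' :: "'a set" assume "S \<in> Pow Basis" "S' \<in> Pow Basis" "S \<noteq> S'"
        then have "Qb a b c r S (1/2) \<inter> Qb a b c r S' (1/2) = {}" by (intro children_disjoint) auto
        then show "E \<inter> Uk a b E \<delta> k (cS S) rS \<inter> (E \<inter> Uk a b E \<delta> k (cS S') rS) = {}"
          using sub[of S] sub[of S'] by blast
      qed
      have "(\<Sum>S\<in>Pow Basis. measure lebesgue (E \<inter> Uk a b E \<delta> k (cS S) rS)) =
            measure lebesgue (\<Union>S\<in>Pow Basis. E \<inter> Uk a b E \<delta> k (cS S) rS)"
        using measure_UNION'[of "Pow Basis" "\<lambda>S. E \<inter> Uk a b E \<delta> k (cS S) rS" lebesgue, OF _ _ pw] EU by simp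
      also have "\<dots> \<le> measure lebesgue (E \<inter> Uk a b E \<delta> (Suc k) c r)"
      proof (rule measure_mono_fmeasurable)
        show "(\<Union>S\<in>Pow Basis. E \<inter> Uk a b E \<delta> k (cS S) rS) \<subseteq> E \<inter> Uk a b E \<delta> (Suc k) c r"
          using sub by blast
        show "(\<Union>S\<in>Pow Basis. E \<inter> Uk a b E \<delta> k (cS S) rS) \<in> sets lebesgue"
          using EU by (intro sets.finite_UN) (auto simp: fmeasurableD)
        show "E \<inter> Uk a b E \<delta> (Suc k) c r \<in> lmeasurable" by (rule EU)
      qed
      finally show ?thesis .
    qed
    have "(\<Sum>S\<in>Pow Basis. \<gamma> * (measure lebesgue (E \<inter> Qb a b c r S (1/2)) - measure lebesgue (E \<inter> Uk a b E \<delta> k (cS S) rS)))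
       \<le> (\<Sum>S\<in>Pow Basis. measure lebesgue ((H - E) \<inter> Qb a b c r S (1/2)))"
      by (rule sum_mono) (rule IH)
    also have "\<dots> = measure lebesgue ((H - E) \<inter> Bx a b c r)" by (rule s2)
    finally have A0: "(\<Sum>S\<in>Pow Basis. \<gamma> * (measure lebesgue (E \<inter> Qb a b c r S (1/2)) - measure lebesgue (E \<inter> Uk a b E \<delta> k (cS S) rS)))
       \<le> measure lebesgue ((H - E) \<inter> Bx a b c r)" .
    have eqs: "(\<Sum>S\<in>Pow Basis. \<gamma> * (f S - g S)) = \<gamma> * ((\<Sum>S\<in>Pow Basis. f S) - (\<Sum>S\<in>Pow Basis. g S))"
      for f g :: "'a set \<Rightarrow> real"
      by (simp add: sum_subtractf sum_distrib_left right_diff_distrib)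
    have A: "\<gamma> * (measure lebesgue (E \<inter> Bx a b c r) - (\<Sum>S\<in>Pow Basis. measure lebesgue (E \<inter> Uk a b E \<delta> k (cS S) rS)))
       \<le> measure lebesgue ((H - E) \<inter> Bx a b c r)"
      using A0 unfolding eqs s1 .
    have "\<gamma> * (measure lebesgue (E \<inter> Bx a b c r) - measure lebesgue (E \<inter> Uk a b E \<delta> (Suc k) c r))
       \<le> \<gamma> * (measure lebesgue (E \<inter> Bx a b c r) - (\<Sum>S\<in>Pow Basis. measure lebesgue (E \<inter> Uk a b E \<delta> k (cS S) rS)))"
      using s3 \<gamma> by (intro mult_left_mono) auto
    with A show ?thesis unfolding \<gamma>_def by linarith
  qed
qed

lemma Bx_unit: "Bx a b 0 1 = box a b"
  unfolding Bx_def by simp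

lemma key_ineq:
  fixes a b :: "'a::euclidean_space"
  assumes ab: "\<forall>i\<in>Basis. a\<bullet>i < b\<bullet>i" and E: "E \<in> lmeasurable"
    and Hm: "H \<in> sets lebesgue"
    and hi: "\<And>c r. r > 0 \<Longrightarrow> \<not> lowd E \<delta> (Bx a b c r) \<Longrightarrow> Bx a b c r \<subseteq> H"
    and d: "0 < \<delta>" and low: "lowd E \<delta> (box a b)"
  shows "(1 + \<delta> / 2 ^ DIM('a)) * measure lebesgue (E \<inter> box a b) \<le> measure lebesgue (H \<inter> box a b)"
proof -
  have Es: "E \<in> sets lebesgue" using E by (simp add: fmeasurableD)
  define N0 where "N0 = {y \<in> E. \<forall>\<epsilon>>0. \<exists>c r. 0 < r \<and> r < \<epsilon> \<and> y \<in> Bx a b c r \<and> lowd E \<delta> (Bx a b c r)}"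
  have negN0: "negligible N0"
  proof (rule null_lemma[OF ab E d])
    show "N0 \<subseteq> E" unfolding N0_def by blast
    fix y \<epsilon> assume "y \<in> N0" "(\<epsilon>::real) > 0"
    then show "\<exists>c r. 0 < r \<and> r < \<epsilon> \<and> y \<in> Bx a b c r \<and>
              measure lebesgue (E \<inter> Bx a b c r) \<le> (1-\<delta>) * measure lebesgue (Bx a b c r)"
      unfolding N0_def lowd_def by blast
  qed
  have EH: "E - H \<subseteq> N0"
  proof
    fix y assume y: "y \<in> E - H"
    have "\<exists>c r. 0 < r \<and> r < \<epsilon> \<and> y \<in> Bx a b c r \<and> lowd E \<delta> (Bx a b c r)" if e: "\<epsilon> > 0" for \<epsilon>
    proof (intro exI conjI)
      define r where "r = \<epsilon>/2"
      show "0 < r" "r < \<epsilon>" unfolding r_def using e by auto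
      show "y \<in> Bx a b (y - r *\<^sub>R ((1/2) *\<^sub>R (a + b))) r"
        unfolding mem_Bx using ab \<open>0 < r\<close> by (auto simp: inner_diff_left inner_add_left algebra_simps)
      show "lowd E \<delta> (Bx a b (y - r *\<^sub>R ((1/2) *\<^sub>R (a + b))) r)"
      proof (rule ccontr)
        assume "\<not> ?thesis"
        then have "Bx a b (y - r *\<^sub>R ((1/2) *\<^sub>R (a + b))) r \<subseteq> H" using hi \<open>0 < r\<close> by blast
        then show False using \<open>y \<in> Bx a b (y - r *\<^sub>R ((1/2) *\<^sub>R (a + b))) r\<close> y by blast
      qed
    qed
    then show "y \<in> N0" unfolding N0_def using y by blast
  qed
  define A where "A k = E \<inter> Uk a b E \<delta> k 0 1" for k
  have Al: "A k \<in> lmeasurable" for k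
    unfolding A_def using fmeasurable_Int_fmeasurable[OF Uk_lmeasurable Es] by (simp add: Int_commute)
  have decA: "decseq A"
  proof (rule decseq_SucI)
    fix k
    have "(1::real) / 2 ^ Suc k \<le> 1 / 2 ^ k" by (simp add: field_simps)
    then show "A (Suc k) \<subseteq> A k" unfolding A_def Uk_def by fastforce
  qed
  have interA: "(\<Inter>k. A k) \<subseteq> N0"
  proof
    fix y assume y: "y \<in> (\<Inter>k. A k)"
    have "\<exists>c r. 0 < r \<and> r < \<epsilon> \<and> y \<in> Bx a b c r \<and> lowd E \<delta> (Bx a b c r)" if e: "\<epsilon> > 0" for \<epsilon>
    proof -
      obtain k where k: "(1/2::real)^k < \<epsilon>" using real_arch_pow_inv[OF e, of "1/2"] by auto
      have "y \<in> Uk a b E \<delta> k 0 1" using y unfolding A_def by blast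
      then obtain c' r' where "0 < r'" "r' \<le> 1 / 2^k" "y \<in> Bx a b c' r'" "lowd E \<delta> (Bx a b c' r')"
        unfolding Uk_def by blast
      moreover have "(1::real) / 2^k = (1/2)^k" by (simp add: power_divide)
      ultimately show ?thesis using k by (intro exI[of _ c'] exI[of _ r']) auto
    qed
    moreover have "y \<in> E" using y unfolding A_def by blast
    ultimately show "y \<in> N0" unfolding N0_def by blast
  qed
  have lim: "(\<lambda>k. measure lebesgue (A k)) \<longlonglongrightarrow> 0"
  proof -
    have "(\<lambda>k. measure lebesgue (A k)) \<longlonglongrightarrow> measure lebesgue (\<Inter>k. A k)"
    proof (rule Lim_measure_decseq)
      show "range A \<subseteq> sets lebesgue" using Al by (auto intro: fmeasurableD)
      show "decseq A" by (rule decA)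
      show "emeasure lebesgue (A i) \<noteq> \<infinity>" for i using fmeasurableD2[OF Al[of i]] by simp
    qed
    moreover have "measure lebesgue (\<Inter>k. A k) = 0"
      using negligible_subset[OF negN0 interA] by (rule negligible_imp_measure0)
    ultimately show ?thesis by simp
  qed
  define \<gamma> where "\<gamma> = \<delta> / 2 ^ DIM('a)"
  have claim: "\<gamma> * (measure lebesgue (E \<inter> box a b) - measure lebesgue (A k)) \<le> measure lebesgue ((H - E) \<inter> box a b)" for k
    using main_claim[OF ab Es Hm hi d, of 1 0 k] low unfolding Bx_unit A_def \<gamma>_def by simp
  have lim2: "(\<lambda>k. \<gamma> * (measure lebesgue (E \<inter> box a b) - measure lebesgue (A k))) \<longlonglongrightarrow> \<gamma> * (measure lebesgue (E \<inter> box a b) - 0)"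
    by (intro tendsto_intros lim)
  have C: "\<gamma> * measure lebesgue (E \<inter> box a b) \<le> measure lebesgue ((H - E) \<inter> box a b)"
    using LIMSEQ_le_const2[OF lim2] claim by simp
  have EB: "E \<inter> box a b \<in> lmeasurable" using fmeasurable_Int_fmeasurable[OF E, of "box a b"] by simp
  have m1: "measure lebesgue (E \<inter> H \<inter> box a b) = measure lebesgue (E \<inter> box a b)"
  proof (rule measure_negligible_symdiff[OF EB])
    show "negligible (E \<inter> box a b - E \<inter> H \<inter> box a b \<union> (E \<inter> H \<inter> box a b - E \<inter> box a b))"
      by (rule negligible_subset[OF negN0]) (use EH in blast)
  qed
  have HB: "H \<inter> box a b = (E \<inter> H \<inter> box a b) \<union> ((H - E) \<inter> box a b)" by blast
  have m2: "measure lebesgue (H \<inter> box a b) = measure lebesgue (E \<inter> H \<inter> box a b) + measure lebesgue ((H - E) \<inter> box a b)"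
  proof -
    have l1: "E \<inter> H \<inter> box a b \<in> lmeasurable"
      using fmeasurable_Int_fmeasurable[OF EB Hm] by (simp add: Int_ac)
    have l2: "(H - E) \<inter> box a b \<in> lmeasurable"
      using fmeasurable_Int_fmeasurable[OF lmeasurable_box sets.Diff[OF Hm Es]] by (simp add: Int_ac)
    show ?thesis unfolding HB
      by (rule measure_Union) (use l1 l2 in \<open>auto simp: fmeasurable_def\<close>)
  qed
  show ?thesis using C m1 m2 unfolding \<gamma>_def by (simp add: algebra_simps)
qed

theorem theorem2:
  fixes \<B> :: "'a::euclidean_space set set" and E :: "'a set"
    and \<alpha> \<xi> \<delta> :: real
  assumes "\<forall>R\<in>\<B>. is_open_box R"
    and "homothecy_invariant \<B>"
    and "E \<in> sets lebesgue" and "emeasure lebesgue E < \<infinity>"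
    and "0 < \<alpha>" and "\<alpha> < 1"
    and "0 < \<xi>" and "\<xi> < 1" and "0 < \<delta>" and "\<delta> < 1"
    and "\<alpha> < 1 - \<delta>" and "1 - \<delta> < \<xi>"
  shows "halo \<B> \<alpha> E \<subseteq>
           halo \<B> (\<alpha> * (1 + (1 - \<xi>) / 2 ^ DIM('a))) (halo \<B> (1 - \<delta>) E)"
proof
  note B = assms(1) and hom = assms(2) and Es = assms(3)
  have E: "E \<in> lmeasurable" using assms(3,4) by (simp add: fmeasurable_def)
  define H where "H = halo \<B> (1 - \<delta>) E"
  define \<beta> where "\<beta> = \<alpha> * (1 + (1 - \<xi>) / 2 ^ DIM('a))"
  have d1: "1 - \<delta> \<ge> 0" using assms by simp
  have Hchar: "y \<in> H \<longleftrightarrow> (\<exists>R\<in>\<B>. y \<in> R \<and> measure lebesgue (R \<inter> E) / measure lebesgue R > 1 - \<delta>)" for y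
    unfolding H_def halo_def using max_op_gt[OF B Es d1] by simp
  have Hopen: "open H"
  proof -
    have "H = \<Union>{R\<in>\<B>. measure lebesgue (R \<inter> E) / measure lebesgue R > 1 - \<delta>}"
    proof (rule set_eqI)
      fix y show "y \<in> H \<longleftrightarrow> y \<in> \<Union>{R\<in>\<B>. measure lebesgue (R \<inter> E) / measure lebesgue R > 1 - \<delta>}"
        unfolding Hchar Union_iff mem_Collect_eq by blast
    qed
    moreover have "open R" if "R \<in> \<B>" for R
    proof -
      have "is_open_box R" using B that by simp
      then obtain a b where "R = box a b" unfolding is_open_box_def by auto
      then show ?thesis by (simp add: open_box)
    qed
    ultimately show ?thesis by auto
  qed
  then have Hm: "H \<in> sets lebesgue" by simp
  fix x assume "x \<in> halo \<B> \<alpha> E"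
  then obtain R where R: "R \<in> \<B>" "x \<in> R" "measure lebesgue (R \<inter> E) / measure lebesgue R > \<alpha>"
    unfolding halo_def using max_op_gt[OF B Es less_imp_le[OF assms(5)]] by blast
  have "is_open_box R" using B R(1) by simp
  then obtain a b where ab: "\<forall>i\<in>Basis. a\<bullet>i < b\<bullet>i" and Rab: "R = box a b" unfolding is_open_box_def by auto
  have mR: "measure lebesgue R > 0" unfolding Rab by (rule measure_box_pos[OF ab])
  have hi: "Bx a b c r \<subseteq> H" if r: "r > 0" and nl: "\<not> lowd E \<delta> (Bx a b c r)" for c r
  proof
    fix y assume y: "y \<in> Bx a b c r"
    have BxB: "Bx a b c r \<in> \<B>" using Bx_in_B[OF hom _ r] R(1) Rab by simp
    have mpos: "measure lebesgue (Bx a b c r) > 0"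
      using measure_Bx[OF r, of a b c] measure_box_pos[OF ab] r by simp
    have "measure lebesgue (E \<inter> Bx a b c r) > (1-\<delta>) * measure lebesgue (Bx a b c r)"
      using nl unfolding lowd_def by simp
    then have "measure lebesgue (Bx a b c r \<inter> E) / measure lebesgue (Bx a b c r) > 1 - \<delta>"
      using mpos by (simp add: Int_commute pos_less_divide_eq)
    then show "y \<in> H" unfolding Hchar using BxB y by blast
  qed
  have \<beta>0: "\<beta> \<ge> 0" unfolding \<beta>_def using assms by simp
  have goal: "measure lebesgue (R \<inter> H) / measure lebesgue R > \<beta>"
  proof (cases "lowd E \<delta> R")
    case False
    then have "Bx a b 0 1 \<subseteq> H" using hi[of 1 0] Rab by (simp add: Bx_unit)
    then have RH: "R \<inter> H = R" using Rab by (auto simp: Bx_unit)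
    have "(1 - \<xi>) / 2 ^ DIM('a) \<le> 1 - \<xi>" using assms by (simp add: divide_le_eq)
    then have "\<beta> \<le> \<alpha> * (2 - \<xi>)" unfolding \<beta>_def using assms by (intro mult_left_mono) auto
    also have "\<dots> < \<xi> * (2 - \<xi>)" using assms by (intro mult_strict_right_mono) auto
    also have "\<dots> \<le> 1"
    proof -
      have "\<xi> * (2 - \<xi>) = 1 - (1 - \<xi>) * (1 - \<xi>)" by (simp add: algebra_simps)
      moreover have "(1 - \<xi>) * (1 - \<xi>) \<ge> 0" by simp
      ultimately show ?thesis by linarith
    qed
    finally show ?thesis using RH mR by simp
  next
    case True
    have K: "(1 + \<delta> / 2 ^ DIM('a)) * measure lebesgue (E \<inter> box a b) \<le> measure lebesgue (H \<inter> box a b)"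
      by (rule key_ineq[OF ab E Hm hi assms(9)]) (use True Rab in auto)
    have "\<alpha> * measure lebesgue R < measure lebesgue (R \<inter> E)" using R(3) mR by (simp add: pos_less_divide_eq)
    moreover have "(1 - \<xi>) / 2 ^ DIM('a) \<le> \<delta> / 2 ^ DIM('a)" using assms by (intro divide_right_mono) auto
    ultimately have "\<beta> * measure lebesgue R < (1 + \<delta> / 2 ^ DIM('a)) * measure lebesgue (R \<inter> E)"
    proof -
      assume a1: "\<alpha> * measure lebesgue R < measure lebesgue (R \<inter> E)"
        and a2: "(1 - \<xi>) / 2 ^ DIM('a) \<le> \<delta> / 2 ^ DIM('a)"
      have "\<beta> * measure lebesgue R = (1 + (1 - \<xi>) / 2 ^ DIM('a)) * (\<alpha> * measure lebesgue R)"
        unfolding \<beta>_def by (simp add: algebra_simps)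
      also have "\<dots> \<le> (1 + \<delta> / 2 ^ DIM('a)) * (\<alpha> * measure lebesgue R)"
        by (rule mult_right_mono) (use a2 mR assms(5) in auto)
      also have "\<dots> < (1 + \<delta> / 2 ^ DIM('a)) * measure lebesgue (R \<inter> E)"
      proof (rule mult_strict_left_mono[OF a1])
        have "0 \<le> \<delta> / 2 ^ DIM('a)" using assms(9) by simp
        then show "0 < 1 + \<delta> / 2 ^ DIM('a)" by linarith
      qed
      finally show ?thesis .
    qed
    also have "\<dots> \<le> measure lebesgue (R \<inter> H)" using K Rab by (simp add: Int_commute)
    finally show ?thesis using mR by (simp add: pos_less_divide_eq)
  qed
  have "ereal \<beta> < max_op \<B> (indicator H) x"
    by (subst max_op_gt[OF B Hm \<beta>0]) (use R(1,2) goal in blast)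
  then have "x \<in> halo \<B> \<beta> H" unfolding halo_def by simp
  then show "x \<in> halo \<B> (\<alpha> * (1 + (1 - \<xi>) / 2 ^ DIM('a))) (halo \<B> (1 - \<delta>) E)"
    unfolding H_def \<beta>_def .
qed

end
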